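(* Let $\mathbb{X}$ be an $n$-dimensional real polyhedral Banach space and $x\in S_{\mathbb{X}}$. Then $x$ is $k$-smooth if and only if $x$ is a (relative) interior point of an $(n-k)$-face of $B_{\mathbb{X}}$.
   Context: $\mathbb{X}$ is polyhedral if $B_{\mathbb{X}}$ has finitely many extreme points. For $x\in S_{\mathbb{X}}$, $J(x)=\{f\in\mathbb{X}^*:\|f\|=1,f(x)=1\}$ and $x$ is $k$-smooth if $\dim\operatorname{span}J(x)=k$. A convex set $F\subset S_{\mathbb{X}}$ is a face of $B_{\mathbb{X}}$ if whenever $x_1,x_2\in S_{\mathbb{X}}$ and $(1-t)x_1+tx_2\in F$ for some $0<t<1$, then $x_1,x_2\in F$. The dimension of $F$ is the dimension of the span of $\{v-w:v,w\in F\}$; $F$ is an $i$-face if its dimension is $i$. Interior means interior relative to the affine hull of $F$. *)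

theory Defs
  imports "HOL-Analysis.Analysis"
begin

definition supp_functionals :: "'a::real_normed_vector \<Rightarrow> ('a \<Rightarrow>\<^sub>L real) set" where
  "supp_functionals x = {f. norm f = 1 \<and> blinfun_apply f x = 1}"

definition k_smooth :: "nat \<Rightarrow> 'a::real_normed_vector \<Rightarrow> bool" where
  "k_smooth k x \<longleftrightarrow> dim (span (supp_functionals x)) = k"

definition polyhedral_space :: "'a::real_normed_vector itself \<Rightarrow> bool" where
  "polyhedral_space TYPE('a) \<longleftrightarrow> finite {e::'a. e extreme_point_of cball 0 1}"

definition ball_face :: "'a::real_normed_vector set \<Rightarrow> bool" where
  "ball_face F \<longleftrightarrow> convex F \<and> F \<subseteq> sphere 0 1 \<and>
     (\<forall>x1 x2 t. x1 \<in> sphere 0 1 \<longrightarrow> x2 \<in> sphere 0 1 \<longrightarrow> 0 < t \<longrightarrow> t < 1 \<longrightarrow>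
        (1 - t) *\<^sub>R x1 + t *\<^sub>R x2 \<in> F \<longrightarrow> x1 \<in> F \<and> x2 \<in> F)"

definition face_dim :: "'a::real_vector set \<Rightarrow> nat" where
  "face_dim F = dim (span {v - w | v w. v \<in> F \<and> w \<in> F})"

end

theory Submission
  imports Defs
begin


locale fdn =
  fixes Bs :: "'a::banach set"
  assumes indep: "independent Bs" and spanB: "span Bs = UNIV" and finB: "finite Bs"
begin

sublocale fd: finite_dimensional_vector_space "scaleR :: real => 'a => 'a" Bs
  rewrites "module.dependent (*\<^sub>R) = dependent"
    and "module.representation (*\<^sub>R) = representation"
    and "module.subspace (*\<^sub>R) = subspace"
    and "module.span (*\<^sub>R) = span"
    and "vector_space.extend_basis (*\<^sub>R) = extend_basis"
    and "vector_space.dim (*\<^sub>R) = dim"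
    and "Vector_Spaces.linear (*\<^sub>R) (*\<^sub>R) = linear"
    and "Vector_Spaces.linear (*) (*\<^sub>R) = linear"
proof -
  show "finite_dimensional_vector_space (*\<^sub>R) Bs"
    by unfold_locales (use indep spanB finB in \<open>auto simp: dependent_raw_def span_raw_def\<close>)
qed (auto simp add: dependent_raw_def representation_raw_def
      subspace_raw_def span_raw_def extend_basis_raw_def dim_raw_def linear_def
      real_scaleR_def[abs_def])

definition crd :: "'a \<Rightarrow> 'a \<Rightarrow> real" where
  "crd b v = representation Bs v b"

lemma crd_add: "crd b (u + v) = crd b u + crd b v"
  unfolding crd_def using real_vector.representation_add[OF indep, of v u] spanB by simp

lemma crd_scale: "crd b (r *\<^sub>R v) = r * crd b v"
  unfolding crd_def using real_vector.representation_scale[OF indep, of v r] spanB by simp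

lemma crd_diff: "crd b (u - v) = crd b u - crd b v"
  unfolding crd_def using real_vector.representation_diff[OF indep, of v u] spanB by simp

lemma crd_zero: "crd b 0 = 0"
  unfolding crd_def by (simp add: real_vector.representation_zero)

lemma crd_sum_eq: "(\<Sum>b\<in>Bs. crd b v *\<^sub>R b) = v"
  unfolding crd_def using real_vector.sum_representation_eq[OF indep, of v Bs] spanB finB by simp

lemma crd_unique:
  assumes "(\<Sum>b\<in>Bs. t b *\<^sub>R b) = v" "b \<in> Bs"
  shows "crd b v = t b"
proof -
  have "(\<Sum>b\<in>Bs. (t b - crd b v) *\<^sub>R b) = 0"
    using assms(1) crd_sum_eq[of v] by (simp add: scaleR_diff_left sum_subtractf)
  then show ?thesis
    using indep finB assms(2) unfolding fd.independent_explicit by force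
qed

lemma linear_crd: "linear (crd b)"
  by (rule linearI) (simp_all add: crd_add crd_scale)

lemma normeq: "\<exists>m>0. \<forall>v. m * (\<Sum>b\<in>Bs. \<bar>crd b v\<bar>) \<le> norm v"
proof -
  let ?X = "product_topology (\<lambda>_. euclideanreal) Bs"
  define K where "K = PiE Bs (\<lambda>_. {-1..1::real})"
  define g where "g t = (\<Sum>b\<in>Bs. \<bar>t b\<bar>)" for t :: "'a \<Rightarrow> real"
  define Psi where "Psi t = (\<Sum>b\<in>Bs. t b *\<^sub>R b)" for t :: "'a \<Rightarrow> real"
  have cK: "compactin ?X K"
    unfolding K_def compactin_PiE by simp
  have cg: "continuous_map ?X euclideanreal g"
    unfolding g_def
    by (intro continuous_map_sum continuous_map_real_abs finB continuous_map_product_projection) 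
  have cPsi1: "continuous_map ?X euclidean (\<lambda>t. t b *\<^sub>R b)" if "b \<in> Bs" for b
  proof -
    have "continuous_map euclideanreal euclidean (\<lambda>r. r *\<^sub>R b)"
      by (simp add: continuous_on_scaleR continuous_on_id continuous_on_const)
    from continuous_map_compose[OF continuous_map_product_projection[OF that] this]
    show ?thesis by (simp add: o_def)
  qed
  have cPsi: "continuous_map ?X euclidean Psi"
    unfolding Psi_def by (intro continuous_map_sum finB cPsi1)
  define K1 where "K1 = {t \<in> topspace ?X. g t \<in> {1}} \<inter> K"
  have "compactin ?X K1"
    unfolding K1_def
    by (intro closed_Int_compactin cK closedin_continuous_map_preimage[OF cg]) simp
  then have cimg: "compact (Psi ` K1)"
    using image_compactin[OF _ cPsi] by simp
  have nz: "p \<noteq> 0" if pK: "p \<in> Psi ` K1" for p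
  proof
    assume p0: "p = 0"
    obtain t where t: "t \<in> K1" "Psi t = p" using pK by auto
    have "t b = 0" if "b \<in> Bs" for b
      using crd_unique[of t 0 b] t p0 that by (simp add: Psi_def crd_zero)
    then have "g t = 0" by (simp add: g_def)
    with t show False by (simp add: K1_def)
  qed
  obtain m where m: "m > 0" "\<And>p. p \<in> Psi ` K1 \<Longrightarrow> m \<le> norm p"
  proof (cases "Psi ` K1 = {}")
    case True then show ?thesis using that[of 1] by auto
  next
    case False
    obtain p0 where p0: "p0 \<in> Psi ` K1" "\<And>p. p \<in> Psi ` K1 \<Longrightarrow> norm p0 \<le> norm p"
      using continuous_attains_inf[OF cimg False, of norm] continuous_on_norm_id by blast
    show ?thesis using that[of "norm p0"] p0 nz by auto
  qed
  show ?thesis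
  proof (intro exI[of _ m] conjI allI m(1))
    fix v
    define s where "s = (\<Sum>b\<in>Bs. \<bar>crd b v\<bar>)"
    show "m * s \<le> norm v"
    proof (cases "s = 0")
      case True then show ?thesis by (simp add: m)
    next
      case False
      then have spos: "s > 0" unfolding s_def by (simp add: sum_nonneg order_le_neq_trans)
      define t where "t = restrict (\<lambda>b. crd b v / s) Bs"
      have le: "\<bar>crd b v\<bar> \<le> s" if "b \<in> Bs" for b
        unfolding s_def using that finB by (intro member_le_sum) auto
      have "t \<in> K"
        unfolding K_def t_def using le spos by (force simp: abs_le_iff divide_le_eq_1 le_divide_eq)
      moreover have "g t = 1"
        unfolding g_def t_def using spos
        by (simp add: abs_div sum_divide_distrib[symmetric] s_def)
      moreover have "t \<in> topspace ?X"
        unfolding t_def by simp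
      ultimately have "t \<in> K1" unfolding K1_def by simp
      moreover have "Psi t = (1/s) *\<^sub>R v"
      proof -
        have "Psi t = (\<Sum>b\<in>Bs. (1/s) *\<^sub>R (crd b v *\<^sub>R b))"
          unfolding Psi_def t_def by (intro sum.cong) auto
        also have "\<dots> = (1/s) *\<^sub>R v"
          by (simp only: scaleR_sum_right[symmetric] crd_sum_eq)
        finally show ?thesis .
      qed
      ultimately have "m \<le> norm ((1/s) *\<^sub>R v)" using m(2) by force
      then show ?thesis using spos by (simp add: field_simps)
    qed
  qed
qed

end


context fdn begin

lemma crd_out: "b \<notin> Bs \<Longrightarrow> crd b v = 0"
  unfolding crd_def using real_vector.representation_ne_zero by blast

lemma crd_bound: "\<exists>M>0. \<forall>b v. \<bar>crd b v\<bar> \<le> M * norm v"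
proof -
  obtain m where m: "m > 0" "\<And>v. m * (\<Sum>b\<in>Bs. \<bar>crd b v\<bar>) \<le> norm v"
    using normeq by blast
  have "\<bar>crd b v\<bar> \<le> (1/m) * norm v" for b v
  proof (cases "b \<in> Bs")
    case True
    then have "\<bar>crd b v\<bar> \<le> (\<Sum>b\<in>Bs. \<bar>crd b v\<bar>)"
      using finB by (intro member_le_sum) auto
    then have "m * \<bar>crd b v\<bar> \<le> norm v" using m(2)[of v] m(1)
      by (meson dual_order.trans mult_le_cancel_left_pos)
    then show ?thesis using m(1) by (simp add: field_simps)
  qed (use m(1) in \<open>simp add: crd_out\<close>)
  then show ?thesis using m(1) by (intro exI[of _ "1/m"]) auto
qed

lemma bl_crd: "bounded_linear (crd b)"
proof -
  obtain M where "M > 0" "\<And>b v. \<bar>crd b v\<bar> \<le> M * norm v" using crd_bound by blast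
  then show ?thesis
    by (intro bounded_linear_intro[of _ M]) (auto simp: crd_add crd_scale mult.commute)
qed

lemma linear_bounded:
  fixes f :: "'a \<Rightarrow> 'b::real_normed_vector"
  assumes "linear f"
  shows "bounded_linear f"
proof -
  obtain M where M: "M > 0" "\<And>b v. \<bar>crd b v\<bar> \<le> M * norm v" using crd_bound by blast
  have "norm (f v) \<le> norm v * (M * (\<Sum>b\<in>Bs. norm (f b)))" for v
  proof -
    have "f v = f (\<Sum>b\<in>Bs. crd b v *\<^sub>R b)" by (simp add: crd_sum_eq)
    also have "\<dots> = (\<Sum>b\<in>Bs. f (crd b v *\<^sub>R b))" by (rule linear_sum[OF assms])
    also have "\<dots> = (\<Sum>b\<in>Bs. crd b v *\<^sub>R f b)" by (simp add: linear_scale[OF assms])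
    finally have eq: "f v = (\<Sum>b\<in>Bs. crd b v *\<^sub>R f b)" .
    have "norm (f v) \<le> (\<Sum>b\<in>Bs. norm (crd b v *\<^sub>R f b))"
      unfolding eq by (rule norm_sum)
    then have "norm (f v) \<le> (\<Sum>b\<in>Bs. \<bar>crd b v\<bar> * norm (f b))"
      by simp
    also have "\<dots> \<le> (\<Sum>b\<in>Bs. (M * norm v) * norm (f b))"
      using M by (intro sum_mono mult_right_mono) auto
    finally show ?thesis by (simp add: sum_distrib_left mult_ac)
  qed
  then show ?thesis using assms
    by (intro bounded_linear_intro[of _ "M * (\<Sum>b\<in>Bs. norm (f b))"])
       (auto simp: linear_add linear_scale)
qed

definition Psi :: "('a \<Rightarrow> real) \<Rightarrow> 'a" where
  "Psi t = (\<Sum>b\<in>Bs. t b *\<^sub>R b)"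

lemma cont_Psi: "continuous_map (product_topology (\<lambda>_. euclideanreal) Bs) euclidean Psi"
proof -
  have cPsi1: "continuous_map (product_topology (\<lambda>_. euclideanreal) Bs) euclidean (\<lambda>t. t b *\<^sub>R b)"
    if "b \<in> Bs" for b
  proof -
    have "continuous_map euclideanreal euclidean (\<lambda>r. r *\<^sub>R b)"
      by (simp add: continuous_on_scaleR continuous_on_id continuous_on_const)
    from continuous_map_compose[OF continuous_map_product_projection[OF that] this]
    show ?thesis by (simp add: o_def)
  qed
  show ?thesis
    unfolding Psi_def by (intro continuous_map_sum finB cPsi1)
qed

lemma compact_of:
  fixes S :: "'a set"
  assumes "bounded S" "closed S"
  shows "compact S"
proof -
  obtain r where r: "\<And>x. x \<in> S \<Longrightarrow> norm x \<le> r" using assms(1) bounded_iff by blast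
  obtain M where M: "M > 0" "\<And>b v. \<bar>crd b v\<bar> \<le> M * norm v" using crd_bound by blast
  define K where "K = PiE Bs (\<lambda>_. {-(M*r)..M*r})"
  have "compactin (product_topology (\<lambda>_. euclideanreal) Bs) K"
    unfolding K_def compactin_PiE by simp
  then have cK: "compact (Psi ` K)"
    using image_compactin[OF _ cont_Psi] by simp
  have "S \<subseteq> Psi ` K"
  proof
    fix v assume v: "v \<in> S"
    have cb: "\<bar>crd b v\<bar> \<le> M * r" for b
      using M(2)[of b v] mult_left_mono[OF r[OF v], of M] M(1) by linarith
    have l1: "- (M * r) \<le> crd b v" for b
      using cb[of b] by (auto simp: abs_le_iff)
    have l2: "crd b v \<le> M * r" for b
      using cb[of b] by (auto simp: abs_le_iff)
    have "restrict (\<lambda>b. crd b v) Bs \<in> K"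
      unfolding K_def using l1 l2 by auto
    moreover have "Psi (restrict (\<lambda>b. crd b v) Bs) = v"
      unfolding Psi_def using crd_sum_eq[of v] by (metis (no_types, lifting) restrict_apply' sum.cong)
    ultimately show "v \<in> Psi ` K" by force
  qed
  then have "S = Psi ` K \<inter> S" by blast
  then show ?thesis using compact_Int_closed[OF cK assms(2)] by simp
qed

lemma compact_B: "compact (cball (0::'a) 1)"
  by (rule compact_of) auto

definition ip :: "'a \<Rightarrow> 'a \<Rightarrow> real" where
  "ip u v = (\<Sum>b\<in>Bs. crd b u * crd b v)"

abbreviation q :: "'a \<Rightarrow> real" where "q v \<equiv> ip v v"

lemma ip_sym: "ip u v = ip v u"
  unfolding ip_def by (simp add: mult.commute)

lemma ip_add_right: "ip u (v + w) = ip u v + ip u w"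
  unfolding ip_def by (simp add: crd_add distrib_left sum.distrib)

lemma ip_diff_right: "ip u (v - w) = ip u v - ip u w"
  unfolding ip_def by (simp add: crd_diff right_diff_distrib sum_subtractf)

lemma ip_scale_right: "ip u (r *\<^sub>R v) = r * ip u v"
  unfolding ip_def by (simp add: crd_scale sum_distrib_left mult_ac)

lemma ip_add_left: "ip (v + w) u = ip v u + ip w u"
  using ip_add_right ip_sym by metis

lemma ip_diff_left: "ip (v - w) u = ip v u - ip w u"
  using ip_diff_right ip_sym by metis

lemma ip_scale_left: "ip (r *\<^sub>R v) u = r * ip v u"
  using ip_scale_right ip_sym by metis

lemma q_nonneg: "q v \<ge> 0"
  unfolding ip_def by (simp add: sum_nonneg)

lemma q_zero: "q v = 0 \<longleftrightarrow> v = 0"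
proof
  assume "q v = 0"
  then have "\<forall>b\<in>Bs. crd b v * crd b v = 0"
    unfolding ip_def using finB by (subst (asm) sum_nonneg_eq_0_iff) auto
  then have "\<forall>b\<in>Bs. crd b v = 0" by simp
  then show "v = 0" using crd_sum_eq[of v] by simp
qed (simp add: ip_def crd_zero)

lemma q_pos: "v \<noteq> 0 \<Longrightarrow> q v > 0"
  using q_nonneg q_zero by (metis order_le_neq_trans)

lemma q_diff_scale: "q (a - t *\<^sub>R d) = q a - 2 * t * ip a d + t^2 * q d"
proof -
  have "q (a - t *\<^sub>R d) = (\<Sum>b\<in>Bs. crd b a * crd b a - 2*t*(crd b a * crd b d) + t^2 * (crd b d * crd b d))"
    unfolding ip_def by (intro sum.cong) (auto simp: crd_diff crd_scale power2_eq_square algebra_simps)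
  then show ?thesis by (simp add: ip_def sum.distrib sum_subtractf sum_distrib_left)
qed

lemma q_comb: "(1-u) * q a + u * q b - q ((1-u) *\<^sub>R a + u *\<^sub>R b) = u * (1-u) * q (a - b)"
proof -
  have e1: "(1-u) *\<^sub>R a + u *\<^sub>R b = a - u *\<^sub>R (a - b)" by (simp add: algebra_simps)
  have e2: "b = a - 1 *\<^sub>R (a - b)" by simp
  have "q (a - 1 *\<^sub>R (a - b)) = q a - 2 * 1 * ip a (a - b) + 1^2 * q (a - b)"
    by (rule q_diff_scale)
  then have h1: "q b = q a - 2 * ip a (a - b) + q (a - b)" by simp
  have h2: "q ((1-u) *\<^sub>R a + u *\<^sub>R b) = q a - 2 * u * ip a (a - b) + u^2 * q (a - b)"
    unfolding e1 by (rule q_diff_scale)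
  show ?thesis unfolding h2 h1 by (simp add: power2_eq_square algebra_simps)
qed

lemma q_par: "q (a + b) \<le> 2 * q a + 2 * q b"
proof -
  have "q (a + b) + q (a - b) = 2 * q a + 2 * q b"
    by (simp add: ip_diff_left ip_diff_right ip_add_left ip_add_right ip_sym[of b a] algebra_simps)
  then show ?thesis using q_nonneg[of "a - b"] by linarith
qed

lemma crd_le_q: "(crd b v)^2 \<le> q v"
proof (cases "b \<in> Bs")
  case True
  then show ?thesis unfolding ip_def power2_eq_square
    using finB by (intro member_le_sum) auto
next
  case False then show ?thesis by (simp add: crd_out q_nonneg)
qed

definition KB :: real where "KB = (\<Sum>b\<in>Bs. norm b)"

lemma KB_nonneg: "KB \<ge> 0" unfolding KB_def by (simp add: sum_nonneg)

lemma norm_le_q: "norm v \<le> KB * sqrt (q v)"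
proof -
  have "norm v = norm (\<Sum>b\<in>Bs. crd b v *\<^sub>R b)" using crd_sum_eq[of v] by simp
  also have "\<dots> \<le> (\<Sum>b\<in>Bs. \<bar>crd b v\<bar> * norm b)"
    by (metis (no_types, lifting) norm_scaleR norm_sum sum.cong)
  also have "\<dots> \<le> (\<Sum>b\<in>Bs. sqrt (q v) * norm b)"
    by (intro sum_mono mult_right_mono) (auto simp: real_le_rsqrt crd_le_q)
  also have "\<dots> = KB * sqrt (q v)"
    by (simp add: KB_def sum_distrib_right mult.commute)
  finally show ?thesis .
qed

lemma cont_ip: "continuous_on S f \<Longrightarrow> continuous_on S g \<Longrightarrow> continuous_on S (\<lambda>w. ip (f w) (g w))"
  unfolding ip_def
  by (intro continuous_on_sum continuous_on_mult bounded_linear.continuous_on[OF bl_crd])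

end


context fdn begin

lemma nearest:
  fixes C :: "'a set" and y :: 'a
  assumes "compact C" "convex C" "C \<noteq> {}" "y \<notin> C"
  obtains z where "z \<in> C" "\<And>w. w \<in> C \<Longrightarrow> ip (y - z) w \<le> ip (y - z) z"
    "ip (y - z) z < ip (y - z) y" "\<And>w. w \<in> C \<Longrightarrow> q (y - z) \<le> q (y - w)"
proof -
  have "continuous_on C (\<lambda>w. q (y - w))" by (intro cont_ip continuous_intros)
  then obtain z where z: "z \<in> C" "\<And>w. w \<in> C \<Longrightarrow> q (y - z) \<le> q (y - w)"
    using continuous_attains_inf[OF assms(1,3)] by blast
  have var: "ip (y - z) (w - z) \<le> 0" if w: "w \<in> C" for w
  proof (rule ccontr)
    define a where "a = y - z"
    define d where "d = w - z"
    assume "\<not> ip (y - z) (w - z) \<le> 0"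
    then have pos: "ip a d > 0" by (simp add: a_def d_def)
    have key: "q a \<le> q a - 2 * t * ip a d + t^2 * q d" if t: "0 < t" "t \<le> 1" for t
    proof -
      have "(1 - t) *\<^sub>R z + t *\<^sub>R w \<in> C"
        using assms(2) z(1) w t unfolding convex_alt by auto
      then have "q (y - z) \<le> q (y - ((1 - t) *\<^sub>R z + t *\<^sub>R w))" by (rule z(2))
      moreover have "y - ((1 - t) *\<^sub>R z + t *\<^sub>R w) = a - t *\<^sub>R d"
        by (simp add: a_def d_def algebra_simps)
      ultimately show ?thesis by (simp add: q_diff_scale a_def)
    qed
    from key[of 1] have qd: "q d > 0" using pos by simp
    define t where "t = min 1 (ip a d / q d)"
    have t: "0 < t" "t \<le> 1" "t * q d \<le> ip a d"
      using pos qd by (auto simp: t_def min_def field_simps)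
    have "t * (t * q d) \<le> t * ip a d" using t by (intro mult_left_mono) auto
    moreover have "t * ip a d > 0" using t pos by simp
    ultimately show False using key[OF t(1,2)] by (simp add: power2_eq_square)
  qed
  show ?thesis
  proof (rule that[OF z(1) _ _ z(2)])
    fix w assume "w \<in> C"
    then show "ip (y - z) w \<le> ip (y - z) z" using var[of w] by (simp add: ip_diff_right)
  next
    have "y \<noteq> z" using z(1) assms(4) by auto
    then have "q (y - z) > 0" by (intro q_pos) simp
    then show "ip (y - z) z < ip (y - z) y" by (simp add: ip_diff_right)
  qed
qed

lemma ext_exists:
  fixes K :: "'a set"
  assumes "compact K" "convex K" "K \<noteq> {}"
  shows "\<exists>e. e extreme_point_of K"
proof -
  have "continuous_on K (\<lambda>w. q w)" by (intro cont_ip continuous_intros)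
  then obtain e where e: "e \<in> K" "\<And>w. w \<in> K \<Longrightarrow> q w \<le> q e"
    using continuous_attains_sup[OF assms(1,3)] by blast
  have "e \<notin> open_segment a b" if "a \<in> K" "b \<in> K" for a b
  proof
    assume "e \<in> open_segment a b"
    then obtain u where u: "a \<noteq> b" "0 < u" "u < 1" "e = (1 - u) *\<^sub>R a + u *\<^sub>R b"
      by (auto simp: in_segment)
    have "q (a - b) > 0" using u(1) by (intro q_pos) simp
    then have "u * (1 - u) * q (a - b) > 0" using u by simp
    moreover have "(1 - u) * q a \<le> (1 - u) * q e" using e that u by (intro mult_left_mono) auto
    moreover have "u * q b \<le> u * q e" using e that u by (intro mult_left_mono) auto
    ultimately show False using q_comb[of u a b] u(4) by (simp add: algebra_simps)
  qed
  then show ?thesis using e(1) unfolding extreme_point_of_def by blast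
qed

lemma minkowski:
  assumes finE: "finite {e. e extreme_point_of cball (0::'a) 1}"
  shows "cball (0::'a) 1 = convex hull {e. e extreme_point_of cball (0::'a) 1}"
proof -
  define B where "B = cball (0::'a) 1"
  define E where "E = {e. e extreme_point_of B}"
  define C where "C = convex hull E"
  have EB: "E \<subseteq> B" unfolding E_def extreme_point_of_def by auto
  have CB: "C \<subseteq> B" unfolding C_def B_def using EB B_def by (simp add: hull_minimal convex_cball)
  have cC: "compact C" unfolding C_def E_def B_def by (rule finite_imp_compact_convex_hull[OF finE])
  have cvC: "convex C" unfolding C_def by simp
  have cB: "compact B" "convex B" "B \<noteq> {}" unfolding B_def by (auto simp: compact_B)
  obtain e0 where "e0 extreme_point_of B" using ext_exists[OF cB] by blast
  then have "C \<noteq> {}" unfolding C_def E_def using hull_subset by fastforce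
  have "B \<subseteq> C"
  proof
    fix y assume yB: "y \<in> B"
    show "y \<in> C"
    proof (rule ccontr)
      assume "y \<notin> C"
      then obtain z where z: "z \<in> C" "\<And>w. w \<in> C \<Longrightarrow> ip (y - z) w \<le> ip (y - z) z"
        "ip (y - z) z < ip (y - z) y"
        using nearest[OF cC cvC \<open>C \<noteq> {}\<close>] by metis
      define h where "h w = ip (y - z) w" for w
      have hlin: "h ((1-u) *\<^sub>R a + u *\<^sub>R b) = (1-u) * h a + u * h b" for u a b
        by (simp add: h_def ip_add_right ip_scale_right)
      have hcont: "continuous_on S h" for S
        unfolding h_def by (intro cont_ip continuous_intros)
      obtain m0 where m0: "m0 \<in> B" "\<And>w. w \<in> B \<Longrightarrow> h w \<le> h m0"
        using continuous_attains_sup[OF cB(1) cB(3) hcont] by blast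
      define M where "M = h m0"
      define G where "G = B \<inter> h -` {M}"
      have "closed (h -` {M})"
        by (rule closed_vimage[OF _ hcont]) simp
      then have cG: "compact G" unfolding G_def using compact_Int_closed[OF cB(1)] by blast
      have cvG: "convex G"
        unfolding G_def convex_alt
      proof (intro ballI allI impI)
        fix a b and u :: real assume "a \<in> B \<inter> h -` {M}" "b \<in> B \<inter> h -` {M}" "0 \<le> u \<and> u \<le> 1"
        moreover have "h ((1 - u) *\<^sub>R a + u *\<^sub>R b) = (1-u) * h a + u * h b" by (rule hlin)
        ultimately show "(1 - u) *\<^sub>R a + u *\<^sub>R b \<in> B \<inter> h -` {M}"
          using cB(2) unfolding convex_alt by (auto simp: algebra_simps)
      qed
      have "G \<noteq> {}" unfolding G_def M_def using m0 by auto
      then obtain e where e: "e extreme_point_of G" using ext_exists[OF cG cvG] by blast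
      have eG: "e \<in> G" using e extreme_point_of_def by auto
      have "e extreme_point_of B"
        unfolding extreme_point_of_def
      proof (intro conjI ballI)
        show "e \<in> B" using eG G_def by auto
        fix a b assume ab: "a \<in> B" "b \<in> B"
        show "e \<notin> open_segment a b"
        proof
          assume "e \<in> open_segment a b"
          then obtain u where u: "a \<noteq> b" "0 < u" "u < 1" "e = (1 - u) *\<^sub>R a + u *\<^sub>R b"
            by (auto simp: in_segment)
          have ha: "h a \<le> M" "h b \<le> M" using m0 ab M_def by auto
          have he: "(1-u) * h a + u * h b = M" using eG u(4) hlin G_def by auto
          have "h a = M"
          proof (rule ccontr)
            assume "h a \<noteq> M"
            then have "(1-u) * (M - h a) > 0" using ha u by simp
            moreover have "u * (M - h b) \<ge> 0" using ha u by simp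
            ultimately show False using he by (simp add: algebra_simps)
          qed
          moreover have "h b = M"
          proof (rule ccontr)
            assume "h b \<noteq> M"
            then have "u * (M - h b) > 0" using ha u by simp
            moreover have "(1-u) * (M - h a) \<ge> 0" using ha u by simp
            ultimately show False using he by (simp add: algebra_simps)
          qed
          ultimately have "a \<in> G" "b \<in> G" using ab G_def by auto
          then show False using e \<open>e \<in> open_segment a b\<close> unfolding extreme_point_of_def by blast
        qed
      qed
      then have "e \<in> C" unfolding C_def E_def using hull_subset by fastforce
      then have "h e \<le> h z" using z(2) h_def by auto
      moreover have "h y \<le> M" using m0 yB M_def by auto
      moreover have "h e = M" using eG G_def by auto
      ultimately show False using z(3) h_def by auto
    qed
  qed
  then show ?thesis using CB unfolding B_def C_def E_def by auto
qed

end



lemma blin_lin: "linear (blinfun_apply f)"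
  by (simp add: blinfun.bounded_linear_right bounded_linear.linear)

lemma hull_one:
  fixes f :: "'a::real_normed_vector \<Rightarrow>\<^sub>L real"
  assumes "finite A" "\<And>a. a \<in> A \<Longrightarrow> blinfun_apply f a = 1" "y \<in> convex hull A"
  shows "blinfun_apply f y = 1"
proof -
  obtain u where u: "\<forall>x\<in>A. 0 \<le> u x" "sum u A = 1" "(\<Sum>x\<in>A. u x *\<^sub>R x) = y"
    using assms(3) convex_hull_finite[OF assms(1)] by auto
  have "blinfun_apply f y = (\<Sum>x\<in>A. u x * blinfun_apply f x)"
    using u(3)[symmetric] by (simp add: linear_sum[OF blin_lin] linear_scale[OF blin_lin])
  also have "\<dots> = 1" using assms(2) u(2) by simp
  finally show ?thesis .
qed

context fdn begin

lemma q_scale: "q (c *\<^sub>R v) = c^2 * q v"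
  by (simp add: ip_scale_left ip_scale_right power2_eq_square)

lemma q_swap: "q (a - b) = q (b - a)"
  using q_scale[of "-1" "a - b"] by simp

lemma supp_finite:
  assumes finE: "finite {e. e extreme_point_of cball (0::'a) 1}"
  shows "\<exists>\<Phi>::('a \<Rightarrow>\<^sub>L real) set. finite \<Phi> \<and> (\<forall>f\<in>\<Phi>. norm f \<le> 1) \<and>
           (\<forall>y::'a. norm y = 1 \<longrightarrow> (\<exists>f\<in>\<Phi>. blinfun_apply f y = 1))"
proof -
  define B where "B = cball (0::'a) 1"
  define E where "E = {e. e extreme_point_of B}"
  have finE': "finite E" using finE unfolding E_def B_def .
  have BE: "B = convex hull E" unfolding B_def E_def by (rule minkowski[OF finE])
  have EB: "E \<subseteq> B" unfolding E_def extreme_point_of_def by auto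
  have cB: "compact B" "convex B" "B \<noteq> {}" unfolding B_def by (auto simp: compact_B)
  define Ex where "Ex = {A. A \<subseteq> E \<and> (\<exists>f::'a \<Rightarrow>\<^sub>L real. norm f \<le> 1 \<and> (\<forall>a\<in>A. blinfun_apply f a = 1))}"
  have finEx: "finite Ex" using finE' unfolding Ex_def by (simp add: finite_subset[of _ "Pow E"] subset_iff)
  have "\<forall>A\<in>Ex. \<exists>f::'a \<Rightarrow>\<^sub>L real. norm f \<le> 1 \<and> (\<forall>a\<in>A. blinfun_apply f a = 1)" unfolding Ex_def by auto
  then have "\<exists>F::'a set \<Rightarrow> ('a \<Rightarrow>\<^sub>L real). \<forall>A\<in>Ex. norm (F A) \<le> 1 \<and> (\<forall>a\<in>A. blinfun_apply (F A) a = 1)"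
    by (rule bchoice)
  then obtain F :: "'a set \<Rightarrow> ('a \<Rightarrow>\<^sub>L real)" where F: "\<And>A. A \<in> Ex \<Longrightarrow> norm (F A) \<le> 1 \<and> (\<forall>a\<in>A. blinfun_apply (F A) a = 1)"
    by blast
  have key: "\<exists>A\<in>Ex. y \<in> convex hull A" if y1: "norm y = 1" for y
  proof (rule ccontr)
    assume nk: "\<not> ?thesis"
    define U where "U = \<Union> ((\<lambda>A. convex hull A) ` Ex)"
    have "closed U" unfolding U_def
    proof (intro closed_Union ballI)
      show "finite ((\<lambda>A. convex hull A) ` Ex)" using finEx by simp
      fix T assume "T \<in> (\<lambda>A. convex hull A) ` Ex"
      then obtain A where "A \<in> Ex" "T = convex hull A" by auto
      moreover have "finite A" using \<open>A \<in> Ex\<close> finE' unfolding Ex_def by (auto intro: finite_subset)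
      ultimately show "closed T" by (simp add: compact_imp_closed finite_imp_compact_convex_hull)
    qed
    moreover have "y \<notin> U" using nk unfolding U_def by auto
    ultimately obtain r where r: "r > 0" "ball y r \<subseteq> - U"
      using open_contains_ball[of "- U"] by (auto simp: open_Compl)
    define s where "s = KB * sqrt (q y)"
    have s0: "s \<ge> 0" unfolding s_def using KB_nonneg q_nonneg[of y] by simp
    define \<delta> where "\<delta> = r / (2 * (s + 1))"
    have d0: "\<delta> > 0" unfolding \<delta>_def using r s0 by simp
    define y' where "y' = (1 + \<delta>) *\<^sub>R y"
    have "norm y' = 1 + \<delta>" unfolding y'_def using y1 d0 by simp
    then have "y' \<notin> B" unfolding B_def using d0 by simp
    then obtain z where z: "z \<in> B" "\<And>w. w \<in> B \<Longrightarrow> ip (y' - z) w \<le> ip (y' - z) z"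
      "ip (y' - z) z < ip (y' - z) y'" "\<And>w. w \<in> B \<Longrightarrow> q (y' - z) \<le> q (y' - w)"
      using nearest[OF cB] by metis
    have yB: "y \<in> B" unfolding B_def using y1 by simp
    have "q (y' - z) \<le> q (y' - y)" using z(4)[OF yB] .
    moreover have "y' - y = \<delta> *\<^sub>R y" unfolding y'_def by (simp add: algebra_simps)
    ultimately have qz: "q (z - y') \<le> \<delta>^2 * q y" using q_swap[of y' z] q_scale by simp
    have "q (z - y) = q ((z - y') + \<delta> *\<^sub>R y)"
    proof -
      have "z - y = (z - y') + (y' - y)" by simp
      also have "\<dots> = (z - y') + \<delta> *\<^sub>R y" using \<open>y' - y = \<delta> *\<^sub>R y\<close> by (simp only:)
      finally show ?thesis by (simp only:)
    qed
    also have "\<dots> \<le> 2 * q (z - y') + 2 * q (\<delta> *\<^sub>R y)" by (rule q_par)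
    also have "\<dots> \<le> 4 * \<delta>^2 * q y" using qz q_scale[of \<delta> y] by (simp add: mult.commute)
    finally have "q (z - y) \<le> (2 * \<delta>)^2 * q y" by (simp add: power2_eq_square)
    then have "sqrt (q (z - y)) \<le> sqrt ((2 * \<delta>)^2 * q y)" by (rule real_sqrt_le_mono)
    also have "\<dots> = 2 * \<delta> * sqrt (q y)" using d0 by (simp add: real_sqrt_mult)
    finally have "sqrt (q (z - y)) \<le> 2 * \<delta> * sqrt (q y)" .
    then have "norm (z - y) \<le> KB * (2 * \<delta> * sqrt (q y))"
      using norm_le_q[of "z - y"] KB_nonneg by (meson mult_left_mono order_trans)
    also have "\<dots> = r * s / (s + 1)" unfolding \<delta>_def s_def using s0 s_def
      by (simp add: field_simps)
    also have "\<dots> < r" using r s0 by (simp add: field_simps)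
    finally have "z \<in> ball y r" by (simp add: dist_norm norm_minus_commute)
    then have zU: "z \<notin> U" using r by auto
    define h where "h w = ip (y' - z) w" for w
    define M where "M = h z"
    have hy: "h y \<le> M" using z(2)[OF yB] h_def M_def by simp
    have "h y' = (1 + \<delta>) * h y" unfolding h_def y'_def by (simp add: ip_scale_right)
    then have "(1 + \<delta>) * h y > M" using z(3) h_def M_def by simp
    then have "\<delta> * h y > 0" using hy by (simp add: algebra_simps)
    then have hy0: "h y > 0" using d0 by (simp add: zero_less_mult_iff)
    then have M0: "M > 0" using hy by simp
    define g where "g w = h w / M" for w
    have glin: "linear g"
      by (rule linearI) (simp_all add: g_def h_def ip_add_right ip_scale_right add_divide_distrib)
    have gB: "g w \<le> 1" if "w \<in> B" for w
      using z(2)[OF that] M0 by (simp add: g_def h_def M_def)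
    have gbound: "\<bar>g v\<bar> \<le> norm v" for v
    proof (cases "v = 0")
      case True then show ?thesis using linear_0[OF glin] by simp
    next
      case False
      then have nv: "norm v > 0" by simp
      have "(1 / norm v) *\<^sub>R v \<in> B" "(- 1 / norm v) *\<^sub>R v \<in> B"
        unfolding B_def using nv by auto
      then have "g ((1 / norm v) *\<^sub>R v) \<le> 1" "g ((- 1 / norm v) *\<^sub>R v) \<le> 1" using gB by auto
      then have "g v / norm v \<le> 1" "- g v / norm v \<le> 1"
        by (simp_all add: linear_scale[OF glin] linear_neg[OF glin])
      then show ?thesis using nv by (simp add: abs_le_iff field_simps)
    qed
    have blg: "bounded_linear g"
      using glin gbound
      by (intro bounded_linear_intro[of _ 1]) (auto simp: linear_add linear_scale)
    define gb where "gb = Blinfun g"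
    have gbapp: "blinfun_apply gb = g" unfolding gb_def using blg by (simp add: bounded_linear_Blinfun_apply)
    have ngb: "norm gb \<le> 1"
      by (rule norm_blinfun_bound) (simp_all add: gbapp gbound)
    define A where "A = {e \<in> E. g e = 1}"
    have AEx: "A \<in> Ex" unfolding Ex_def A_def using ngb gbapp by auto
    have finA: "finite A" using finE' unfolding A_def by simp
    have "z \<in> convex hull E" using z(1) BE by simp
    then obtain u where u: "\<forall>x\<in>E. 0 \<le> u x" "sum u E = 1" "(\<Sum>x\<in>E. u x *\<^sub>R x) = z"
      using convex_hull_finite[OF finE'] by auto
    have gz: "g z = 1" using M0 by (simp add: g_def M_def)
    have "g z = (\<Sum>x\<in>E. u x * g x)"
      using u(3)[symmetric] by (simp add: linear_sum[OF glin] linear_scale[OF glin])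
    then have s0: "(\<Sum>x\<in>E. u x * (1 - g x)) = 0"
      using gz u(2) by (simp add: right_diff_distrib sum_subtractf)
    have s1: "\<forall>x\<in>E. u x * (1 - g x) \<ge> 0" using u(1) gB EB by auto
    have zero: "\<forall>x\<in>E. u x * (1 - g x) = 0"
      using sum_nonneg_eq_0_iff[OF finE', of "\<lambda>x. u x * (1 - g x)"] s0 s1 by simp
    have uz: "\<forall>x\<in>E - A. u x = 0" using zero unfolding A_def by auto
    have AE: "A \<subseteq> E" unfolding A_def by auto
    have uz': "\<forall>x\<in>E - A. u x *\<^sub>R x = 0" using uz by simp
    have sA: "sum u A = 1"
      using u(2) sum.mono_neutral_right[OF finE' AE uz] by simp
    have zA: "(\<Sum>x\<in>A. u x *\<^sub>R x) = z"
      using u(3) sum.mono_neutral_right[OF finE' AE uz'] by simp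
    have "z \<in> convex hull A"
      unfolding convex_hull_finite[OF finA]
      by (rule CollectI, rule exI[of _ u]) (use u(1) AE sA zA in auto)
    then have "z \<in> U" using AEx unfolding U_def by auto
    then show False using zU by simp
  qed
  show ?thesis
  proof (intro exI[of _ "F ` Ex"] conjI ballI allI impI)
    show "finite (F ` Ex)" using finEx by simp
    show "norm f \<le> 1" if "f \<in> F ` Ex" for f using that F by auto
    fix y :: 'a assume "norm y = 1"
    then obtain A where A: "A \<in> Ex" "y \<in> convex hull A" using key by blast
    have "finite A" using A(1) finE' unfolding Ex_def by (auto intro: finite_subset)
    then have "blinfun_apply (F A) y = 1" using hull_one[of A "F A" y] F[OF A(1)] A(2) by auto
    then show "\<exists>f\<in>F ` Ex. blinfun_apply f y = 1" using A(1) by auto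
  qed
qed

end



lemma app_le: "norm (f :: 'a::real_normed_vector \<Rightarrow>\<^sub>L real) \<le> 1 \<Longrightarrow> blinfun_apply f v \<le> norm v"
proof -
  assume "norm f \<le> 1"
  then have "norm f * norm v \<le> norm v" by (simp add: mult_left_le_one_le)
  moreover have "blinfun_apply f v \<le> norm f * norm v"
    using norm_blinfun[of f v] by simp
  ultimately show ?thesis by linarith
qed

lemma J_le: "f \<in> supp_functionals x \<Longrightarrow> blinfun_apply f v \<le> norm v"
  unfolding supp_functionals_def by (auto intro: app_le)

lemma eps_exists:
  fixes a b :: "'f \<Rightarrow> real"
  assumes "finite S" "\<And>f. f \<in> S \<Longrightarrow> P f \<Longrightarrow> b f > 0"
  shows "\<exists>\<epsilon>>0. \<forall>f\<in>S. P f \<longrightarrow> \<epsilon> * a f < b f"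
proof -
  define T where "T = insert 1 ((\<lambda>f. b f / (\<bar>a f\<bar> + 1)) ` {f\<in>S. P f})"
  have fT: "finite T" "T \<noteq> {}" unfolding T_def using assms(1) by auto
  define \<epsilon> where "\<epsilon> = Min T"
  have "\<forall>t\<in>T. t > 0" unfolding T_def using assms(2) by (auto intro!: divide_pos_pos)
  then have e0: "\<epsilon> > 0" unfolding \<epsilon>_def using Min_gr_iff[OF fT] by blast
  show ?thesis
  proof (intro exI[of _ \<epsilon>] conjI e0 ballI impI)
    fix f assume f: "f \<in> S" "P f"
    have le: "\<epsilon> \<le> b f / (\<bar>a f\<bar> + 1)" unfolding \<epsilon>_def T_def using f assms(1) by (intro Min_le) auto
    have bf: "b f > 0" using assms(2) f by auto
    have "\<epsilon> * a f \<le> \<epsilon> * \<bar>a f\<bar>" using e0 by (intro mult_left_mono) auto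
    also have "\<dots> \<le> (b f / (\<bar>a f\<bar> + 1)) * \<bar>a f\<bar>" using le by (intro mult_right_mono) auto
    also have "\<dots> < b f" using bf by (simp add: field_simps)
    finally show "\<epsilon> * a f < b f" .
  qed
qed

locale pfdn = fdn Bs for Bs :: "'a::banach set" +
  assumes finE: "finite {e. e extreme_point_of cball (0::'a) 1}"
begin

definition Phi :: "('a \<Rightarrow>\<^sub>L real) set" where
  "Phi = (SOME \<Phi>. finite \<Phi> \<and> (\<forall>f\<in>\<Phi>. norm f \<le> 1) \<and> (\<forall>y::'a. norm y = 1 \<longrightarrow> (\<exists>f\<in>\<Phi>. blinfun_apply f y = 1)))"

lemma Phi: "finite Phi" "\<And>f. f \<in> Phi \<Longrightarrow> norm f \<le> 1"
  "\<And>y. norm y = 1 \<Longrightarrow> \<exists>f\<in>Phi. blinfun_apply f y = 1"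
  using someI_ex[OF supp_finite[OF finE]] unfolding Phi_def[symmetric] by auto

lemma Phi_max: "v \<noteq> 0 \<Longrightarrow> \<exists>f\<in>Phi. blinfun_apply f v = norm v"
proof -
  assume "v \<noteq> 0"
  then have "norm ((1 / norm v) *\<^sub>R v) = 1" by simp
  then obtain f where "f \<in> Phi" "blinfun_apply f ((1 / norm v) *\<^sub>R v) = 1" using Phi(3) by blast
  then show ?thesis using \<open>v \<noteq> 0\<close> by (intro bexI[of _ f]) (auto simp: blinfun.scaleR_right field_simps)
qed

lemma Phi_J: "f \<in> Phi \<Longrightarrow> norm (x::'a) = 1 \<Longrightarrow> blinfun_apply f x = 1 \<Longrightarrow> f \<in> supp_functionals x"
proof -
  assume f: "f \<in> Phi" "norm x = 1" "blinfun_apply f x = 1"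
  have "1 \<le> norm f * norm x" using norm_blinfun[of f x] f by simp
  then show ?thesis using Phi(2)[OF f(1)] f unfolding supp_functionals_def by auto
qed

lemma pc:
  fixes x :: 'a
  assumes x: "norm x = 1" and big: "\<forall>\<epsilon>>0. norm (x + \<epsilon> *\<^sub>R d) > 1"
  shows "\<exists>f\<in>supp_functionals x. blinfun_apply f d > 0"
proof (rule ccontr)
  assume "\<not> ?thesis"
  then have neg: "\<And>f. f \<in> Phi \<Longrightarrow> blinfun_apply f x = 1 \<Longrightarrow> blinfun_apply f d \<le> 0"
    using Phi_J x by force
  have le1: "blinfun_apply f x \<le> 1" if "f \<in> Phi" for f
    using app_le[OF Phi(2)[OF that], of x] x by simp
  obtain \<epsilon> where e: "\<epsilon> > 0" "\<forall>f\<in>Phi. blinfun_apply f x < 1 \<longrightarrow> \<epsilon> * blinfun_apply f d < 1 - blinfun_apply f x"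
    using eps_exists[OF Phi(1), of "\<lambda>f. blinfun_apply f x < 1" "\<lambda>f. 1 - blinfun_apply f x"
        "\<lambda>f. blinfun_apply f d"] by auto
  define y where "y = x + \<epsilon> *\<^sub>R d"
  have ny: "norm y > 1" using big e(1) y_def by auto
  then have "y \<noteq> 0" by auto
  then obtain f where f: "f \<in> Phi" "blinfun_apply f y = norm y" using Phi_max by blast
  have fy: "blinfun_apply f y = blinfun_apply f x + \<epsilon> * blinfun_apply f d"
    unfolding y_def by (simp add: blinfun.add_right blinfun.scaleR_right)
  show False
  proof (cases "blinfun_apply f x < 1")
    case True then show False using e(2) f fy ny by auto
  next
    case False
    then have "blinfun_apply f x = 1" using le1[OF f(1)] by simp
    then have "blinfun_apply f d \<le> 0" using neg f(1) by blast
    then have "\<epsilon> * blinfun_apply f d \<le> 0" using e(1) by (simp add: mult_nonneg_nonpos)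
    then show False using fy f ny \<open>blinfun_apply f x = 1\<close> by auto
  qed
qed

lemma J_ne: "norm (x::'a) = 1 \<Longrightarrow> supp_functionals x \<noteq> {}"
proof -
  assume x: "norm x = 1"
  have "\<forall>\<epsilon>>0. norm (x + \<epsilon> *\<^sub>R x) > 1"
  proof (intro allI impI)
    fix \<epsilon> :: real assume "\<epsilon> > 0"
    have "x + \<epsilon> *\<^sub>R x = (1 + \<epsilon>) *\<^sub>R x" by (simp add: algebra_simps)
    then show "norm (x + \<epsilon> *\<^sub>R x) > 1" using x \<open>\<epsilon> > 0\<close> by simp
  qed
  then show ?thesis using pc[OF x] by auto
qed

definition FJ :: "'a \<Rightarrow> 'a set" where
  "FJ x = {z. norm z \<le> 1 \<and> (\<forall>f\<in>supp_functionals x. blinfun_apply f z = 1)}"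

lemma FJ_face:
  fixes x :: 'a
  assumes x: "norm x = 1"
  shows "ball_face (FJ x)"
  unfolding ball_face_def
proof (intro conjI allI impI)
  show "convex (FJ x)"
    unfolding convex_def FJ_def
  proof (intro allI impI ballI CollectI conjI)
    fix a b and u v :: real
    assume a: "a \<in> {z. norm z \<le> 1 \<and> (\<forall>f\<in>supp_functionals x. blinfun_apply f z = 1)}"
      and b: "b \<in> {z. norm z \<le> 1 \<and> (\<forall>f\<in>supp_functionals x. blinfun_apply f z = 1)}"
      and uv: "0 \<le> u" "0 \<le> v" "u + v = 1"
    have "norm (u *\<^sub>R a + v *\<^sub>R b) \<le> norm (u *\<^sub>R a) + norm (v *\<^sub>R b)"
      by (rule norm_triangle_ineq)
    also have "\<dots> = u * norm a + v * norm b" using uv by simp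
    also have "\<dots> \<le> u * 1 + v * 1" using a b uv by (intro add_mono mult_left_mono) auto
    finally show "norm (u *\<^sub>R a + v *\<^sub>R b) \<le> 1" using uv by simp
    fix f assume "f \<in> supp_functionals x"
    then show "blinfun_apply f (u *\<^sub>R a + v *\<^sub>R b) = 1"
      using a b uv by (simp add: blinfun.add_right blinfun.scaleR_right)
  qed
  obtain f0 where f0: "f0 \<in> supp_functionals x" using J_ne[OF x] by blast
  show "FJ x \<subseteq> sphere 0 1"
  proof
    fix z assume z: "z \<in> FJ x"
    then have "1 \<le> norm z" using J_le[OF f0, of z] f0 unfolding FJ_def by auto
    then show "z \<in> sphere 0 1" using z unfolding FJ_def by auto
  qed
  fix x1 x2 and t :: real
  assume x1: "x1 \<in> sphere 0 1" and x2: "x2 \<in> sphere 0 1" and t: "0 < t" "t < 1"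
    and p: "(1 - t) *\<^sub>R x1 + t *\<^sub>R x2 \<in> FJ x"
  have vals: "blinfun_apply f x1 = 1 \<and> blinfun_apply f x2 = 1" if f: "f \<in> supp_functionals x" for f
  proof -
    have "(1 - t) * blinfun_apply f x1 + t * blinfun_apply f x2 = 1"
      using p f unfolding FJ_def by (simp add: blinfun.add_right blinfun.scaleR_right)
    moreover have "blinfun_apply f x1 \<le> 1" "blinfun_apply f x2 \<le> 1"
      using J_le[OF f, of x1] J_le[OF f, of x2] x1 x2 by auto
    ultimately have eq: "(1 - t) * blinfun_apply f x1 + t * blinfun_apply f x2 = 1"
      and l1: "blinfun_apply f x1 \<le> 1" and l2: "blinfun_apply f x2 \<le> 1" by auto
    have m1: "(1 - t) * blinfun_apply f x1 \<le> (1 - t) * 1" using l1 t by (intro mult_left_mono) auto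
    have m2: "t * blinfun_apply f x2 \<le> t * 1" using l2 t by (intro mult_left_mono) auto
    have "blinfun_apply f x1 = 1"
    proof (rule ccontr)
      assume "blinfun_apply f x1 \<noteq> 1"
      then have "blinfun_apply f x1 < 1" using l1 by simp
      then have "(1 - t) * blinfun_apply f x1 < (1 - t) * 1" using t by (intro mult_strict_left_mono) auto
      then have "(1 - t) * blinfun_apply f x1 + t * blinfun_apply f x2 < (1 - t) * 1 + t * 1"
        using m2 by (rule add_less_le_mono)
      then show False using eq by simp
    qed
    moreover have "blinfun_apply f x2 = 1"
    proof (rule ccontr)
      assume "blinfun_apply f x2 \<noteq> 1"
      then have "blinfun_apply f x2 < 1" using l2 by simp
      then have "t * blinfun_apply f x2 < t * 1" using t by (intro mult_strict_left_mono) auto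
      then have "(1 - t) * blinfun_apply f x1 + t * blinfun_apply f x2 < (1 - t) * 1 + t * 1"
        using m1 by (intro add_le_less_mono)
      then show False using eq by simp
    qed
    ultimately show ?thesis by simp
  qed
  show "x1 \<in> FJ x" using x1 vals unfolding FJ_def by auto
  show "x2 \<in> FJ x" using x2 vals unfolding FJ_def by auto
qed

lemma FJ_relint:
  fixes x :: 'a
  assumes x: "norm x = 1"
  shows "x \<in> rel_interior (FJ x)"
  unfolding mem_rel_interior_ball
proof (intro conjI)
  show xF: "x \<in> FJ x" using x unfolding FJ_def supp_functionals_def by auto
  obtain s where s: "s > 0" "\<forall>f\<in>Phi. blinfun_apply f x < 1 \<longrightarrow> s * 1 < 1 - blinfun_apply f x"
    using eps_exists[OF Phi(1), of "\<lambda>f. blinfun_apply f x < 1" "\<lambda>f. 1 - blinfun_apply f x"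
        "\<lambda>_. 1"] by auto
  have aff: "affine hull (FJ x) \<subseteq> {p. \<forall>f\<in>supp_functionals x. blinfun_apply f p = 1}"
  proof (rule hull_minimal)
    show "FJ x \<subseteq> {p. \<forall>f\<in>supp_functionals x. blinfun_apply f p = 1}" unfolding FJ_def by auto
    show "affine {p. \<forall>f\<in>supp_functionals x. blinfun_apply f p = 1}"
      unfolding affine_def by (auto simp: blinfun.add_right blinfun.scaleR_right distrib_left[symmetric])
  qed
  obtain f0 where f0: "f0 \<in> supp_functionals x" using J_ne[OF x] by blast
  show "\<exists>e>0. ball x e \<inter> affine hull (FJ x) \<subseteq> FJ x"
  proof (intro exI[of _ s] conjI s(1) subsetI)
    fix p assume p: "p \<in> ball x s \<inter> affine hull (FJ x)"
    then have pJ: "\<forall>f\<in>supp_functionals x. blinfun_apply f p = 1" using aff by auto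
    then have "p \<noteq> 0" using f0 by force
    then obtain f where f: "f \<in> Phi" "blinfun_apply f p = norm p" using Phi_max by blast
    have "norm p \<le> 1"
    proof (cases "blinfun_apply f x < 1")
      case True
      have "blinfun_apply f (p - x) \<le> norm (p - x)" using app_le Phi(2)[OF f(1)] by blast
      moreover have "norm (p - x) < s" using p by (simp add: dist_norm norm_minus_commute)
      ultimately show ?thesis using s True f by (auto simp: blinfun.diff_right)
    next
      case False
      then have "blinfun_apply f x = 1" using app_le[OF Phi(2)[OF f(1)], of x] x by simp
      then have "f \<in> supp_functionals x" using Phi_J f(1) x by blast
      then show ?thesis using pJ f by auto
    qed
    then show "p \<in> FJ x" using pJ unfolding FJ_def by auto
  qed
qed

lemma face_span:
  fixes x :: 'a
  assumes x: "norm x = 1" and F: "ball_face F" and xF: "x \<in> rel_interior F"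
  shows "span {v - w | v w. v \<in> F \<and> w \<in> F} = {d. \<forall>f\<in>supp_functionals x. blinfun_apply f d = 0}"
    (is "span ?D = ?P")
proof
  have subP: "subspace ?P"
    unfolding subspace_def by (auto simp: blinfun.add_right blinfun.scaleR_right)
  have xinF: "x \<in> F" using xF rel_interior_subset by auto
  have Fs: "F \<subseteq> sphere 0 1" using F unfolding ball_face_def by auto
  obtain e where e: "e > 0" "ball x e \<inter> affine hull F \<subseteq> F"
    using xF unfolding mem_rel_interior_ball by blast
  show "span ?D \<subseteq> ?P"
  proof (rule span_minimal[OF _ subP], rule subsetI)
    fix dd assume "dd \<in> ?D"
    then obtain v w where vw: "dd = v - w" "v \<in> F" "w \<in> F" by auto
    show "dd \<in> ?P"
    proof (intro CollectI ballI)
      fix f assume f: "f \<in> supp_functionals x"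
      define t where "t = e / (2 * (norm (v - w) + 1))"
      have t0: "t > 0" unfolding t_def using e by (intro divide_pos_pos) (simp_all add: add_nonneg_pos)
      have "norm (v - w) / (2 * (norm (v - w) + 1)) < 1"
        by (subst pos_divide_less_eq) (simp_all add: add_nonneg_pos)
      then have "e * (norm (v - w) / (2 * (norm (v - w) + 1))) < e * 1"
        using e(1) by (intro mult_strict_left_mono) auto
      then have tn: "t * norm (v - w) < e" unfolding t_def by simp
      have le: "c * blinfun_apply f (v - w) \<le> 0" if c: "\<bar>c\<bar> = t" for c
      proof -
        have "x + c *\<^sub>R (v - w) \<in> affine hull F"
          using mem_affine_3_minus[OF affine_affine_hull, of x F v w c] xinF vw
          by (simp add: hull_inc)
        moreover have "x + c *\<^sub>R (v - w) \<in> ball x e"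
          using tn c by (simp add: dist_norm)
        ultimately have "x + c *\<^sub>R (v - w) \<in> F" using e(2) by blast
        then have "norm (x + c *\<^sub>R (v - w)) = 1" using Fs by auto
        then have "blinfun_apply f (x + c *\<^sub>R (v - w)) \<le> 1" using J_le[OF f] by metis
        then show ?thesis using f unfolding supp_functionals_def
          by (simp add: blinfun.add_right blinfun.scaleR_right)
      qed
      from le[of t] le[of "- t"] t0 have "t * blinfun_apply f (v - w) = 0" by simp
      then show "blinfun_apply f dd = 0" using t0 vw(1) by simp
    qed
  qed
  show "?P \<subseteq> span ?D"
  proof
    fix d assume d: "d \<in> ?P"
    have small: "\<exists>\<epsilon>>0. norm (x + \<epsilon> *\<^sub>R dd) \<le> 1" if dd: "dd \<in> ?P" for dd
    proof (rule ccontr)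
      assume "\<not> ?thesis"
      then have "\<forall>\<epsilon>>0. norm (x + \<epsilon> *\<^sub>R dd) > 1" by force
      then obtain f where "f \<in> supp_functionals x" "blinfun_apply f dd > 0" using pc[OF x] by blast
      then show False using dd by auto
    qed
    have "- d \<in> ?P" using d by (simp add: blinfun.minus_right)
    obtain e1 where e1: "e1 > 0" "norm (x + e1 *\<^sub>R d) \<le> 1" using small[OF d] by blast
    obtain e2 where e2: "e2 > 0" "norm (x + e2 *\<^sub>R (- d)) \<le> 1" using small[OF \<open>- d \<in> ?P\<close>] by blast
    define \<eta> where "\<eta> = min e1 e2"
    have eta: "\<eta> > 0" "\<eta> \<le> e1" "\<eta> \<le> e2" unfolding \<eta>_def using e1 e2 by auto
    have shrink: "norm (x + \<eta> *\<^sub>R v) \<le> 1" if "\<epsilon> > 0" "\<eta> \<le> \<epsilon>" "norm (x + \<epsilon> *\<^sub>R v) \<le> 1" for \<epsilon> v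
    proof -
      define l where "l = \<eta> / \<epsilon>"
      have l: "0 \<le> l" "l \<le> 1" unfolding l_def using that eta by auto
      have "x + \<eta> *\<^sub>R v = (1 - l) *\<^sub>R x + l *\<^sub>R (x + \<epsilon> *\<^sub>R v)"
        unfolding l_def using that by (simp add: algebra_simps)
      then have "norm (x + \<eta> *\<^sub>R v) \<le> norm ((1 - l) *\<^sub>R x) + norm (l *\<^sub>R (x + \<epsilon> *\<^sub>R v))"
        by (simp only: norm_triangle_ineq)
      also have "\<dots> = (1 - l) * norm x + l * norm (x + \<epsilon> *\<^sub>R v)" using l by simp
      finally have "norm (x + \<eta> *\<^sub>R v) \<le> (1 - l) * norm x + l * norm (x + \<epsilon> *\<^sub>R v)" .
      also have "\<dots> \<le> (1 - l) * 1 + l * 1" using l x that by (intro add_mono mult_left_mono) auto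
      finally show ?thesis by simp
    qed
    obtain f0 where f0: "f0 \<in> supp_functionals x" using J_ne[OF x] by blast
    have p1: "x + \<eta> *\<^sub>R d \<in> sphere 0 1"
    proof -
      have "norm (x + \<eta> *\<^sub>R d) \<le> 1" using shrink[OF e1(1) eta(2) e1(2)] .
      moreover have "blinfun_apply f0 (x + \<eta> *\<^sub>R d) = 1"
        using f0 d unfolding supp_functionals_def by (simp add: blinfun.add_right blinfun.scaleR_right)
      then have "1 \<le> norm (x + \<eta> *\<^sub>R d)" using J_le[OF f0] by metis
      ultimately show ?thesis by simp
    qed
    have p2: "x - \<eta> *\<^sub>R d \<in> sphere 0 1"
    proof -
      have "norm (x + \<eta> *\<^sub>R (- d)) \<le> 1" using shrink[OF e2(1) eta(3) e2(2)] .
      then have "norm (x - \<eta> *\<^sub>R d) \<le> 1" by simp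
      moreover have "blinfun_apply f0 (x - \<eta> *\<^sub>R d) = 1"
        using f0 d unfolding supp_functionals_def by (simp add: blinfun.diff_right blinfun.scaleR_right)
      then have "1 \<le> norm (x - \<eta> *\<^sub>R d)" using J_le[OF f0] by metis
      ultimately show ?thesis by simp
    qed
    have "(1 - 1/2) *\<^sub>R (x + \<eta> *\<^sub>R d) + (1/2) *\<^sub>R (x - \<eta> *\<^sub>R d) = (1/2) *\<^sub>R x + (1/2) *\<^sub>R x"
      by (simp add: algebra_simps)
    also have "\<dots> = x" by (metis scaleR_add_left field_sum_of_halves scaleR_one)
    finally have "(1 - 1/2) *\<^sub>R (x + \<eta> *\<^sub>R d) + (1/2) *\<^sub>R (x - \<eta> *\<^sub>R d) = x" .
    then have mid: "(1 - 1/2) *\<^sub>R (x + \<eta> *\<^sub>R d) + (1/2) *\<^sub>R (x - \<eta> *\<^sub>R d) \<in> F" using xinF by simp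
    have fp: "\<And>x1 x2 t. x1 \<in> sphere 0 1 \<Longrightarrow> x2 \<in> sphere 0 1 \<Longrightarrow> 0 < t \<Longrightarrow> t < 1 \<Longrightarrow>
        (1 - t) *\<^sub>R x1 + t *\<^sub>R x2 \<in> F \<Longrightarrow> x1 \<in> F \<and> x2 \<in> F"
      using F unfolding ball_face_def by blast
    have both: "x + \<eta> *\<^sub>R d \<in> F" "x - \<eta> *\<^sub>R d \<in> F"
      using fp[OF p1 p2 _ _ mid] by auto
    then have "(x + \<eta> *\<^sub>R d) - (x - \<eta> *\<^sub>R d) \<in> ?D" by blast
    then have "(x + \<eta> *\<^sub>R d) - (x - \<eta> *\<^sub>R d) \<in> span ?D" by (rule span_base)
    moreover have "(x + \<eta> *\<^sub>R d) - (x - \<eta> *\<^sub>R d) = (\<eta> + \<eta>) *\<^sub>R d"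
      by (simp only: scaleR_add_left) (simp add: algebra_simps)
    ultimately have "(\<eta> + \<eta>) *\<^sub>R d \<in> span ?D" by simp
    then have "(1 / (\<eta> + \<eta>)) *\<^sub>R ((\<eta> + \<eta>) *\<^sub>R d) \<in> span ?D" by (rule span_mul)
    then show "d \<in> span ?D" using eta by simp
  qed
qed

end



lemma van_span:
  fixes G :: "('a::real_normed_vector \<Rightarrow>\<^sub>L real) set"
  assumes "\<forall>g\<in>G. blinfun_apply g d = 0" "g \<in> span G"
  shows "blinfun_apply g d = 0"
proof -
  have "subspace {g::'a \<Rightarrow>\<^sub>L real. blinfun_apply g d = 0}"
    unfolding subspace_def by (simp add: blinfun.add_left blinfun.scaleR_left)
  then have "span G \<subseteq> {g. blinfun_apply g d = 0}" using assms(1) by (intro span_minimal) auto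
  then show ?thesis using assms(2) by auto
qed

context fdn begin

lemma rep_linear:
  assumes "independent D" "span D = UNIV"
  shows "linear (\<lambda>v::'a. representation D v b)"
  by (rule linearI) (simp_all add: real_vector.representation_add[OF assms(1)]
      real_vector.representation_scale[OF assms(1)] assms(2))

lemma blinfun_expand:
  assumes D: "independent D" "span D = UNIV" "finite D"
  shows "g = (\<Sum>b\<in>D. blinfun_apply g b *\<^sub>R Blinfun (\<lambda>v::'a. representation D v b))"
proof (rule blinfun_eqI)
  fix v :: 'a
  have bl: "bounded_linear (\<lambda>v::'a. representation D v b)" for b
    by (rule linear_bounded[OF rep_linear[OF D(1,2)]])
  have "blinfun_apply g v = blinfun_apply g (\<Sum>b\<in>D. representation D v b *\<^sub>R b)"
    using real_vector.sum_representation_eq[OF D(1), of v D] D by simp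
  also have "\<dots> = (\<Sum>b\<in>D. representation D v b * blinfun_apply g b)"
    by (simp add: linear_sum[OF blin_lin] linear_scale[OF blin_lin])
  also have "\<dots> = blinfun_apply (\<Sum>b\<in>D. blinfun_apply g b *\<^sub>R Blinfun (\<lambda>v::'a. representation D v b)) v"
    by (simp add: blinfun.sum_left blinfun.scaleR_left bounded_linear_Blinfun_apply[OF bl] mult.commute)
  finally show "blinfun_apply g v = blinfun_apply (\<Sum>b\<in>D. blinfun_apply g b *\<^sub>R Blinfun (\<lambda>v::'a. representation D v b)) v" .
qed

lemma dual_indep_finite:
  fixes Gb :: "('a \<Rightarrow>\<^sub>L real) set"
  assumes "independent Gb"
  shows "finite Gb"
proof -
  let ?S = "(\<lambda>b. Blinfun (\<lambda>v::'a. representation Bs v b)) ` Bs"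
  have "Gb \<subseteq> span ?S"
  proof
    fix g assume "g \<in> Gb"
    have "g = (\<Sum>b\<in>Bs. blinfun_apply g b *\<^sub>R Blinfun (\<lambda>v::'a. representation Bs v b))"
      by (rule blinfun_expand[OF indep spanB finB])
    also have "\<dots> \<in> span ?S"
      by (intro span_sum span_mul span_base) auto
    finally show "g \<in> span ?S" .
  qed
  then show ?thesis using independent_span_bound[OF _ assms] finB by blast
qed

lemma LA1:
  fixes H :: "('a \<Rightarrow>\<^sub>L real) set"
  assumes "finite H"
  shows "dim (UNIV::'a set) \<le> dim {d. \<forall>g\<in>H. blinfun_apply g d = 0} + card H"
  using assms
proof (induction H rule: finite_induct)
  case empty then show ?case by simp
next
  case (insert h H)
  define S where "S = {d. \<forall>g\<in>H. blinfun_apply g d = 0}"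
  define S' where "S' = {d. \<forall>g\<in>insert h H. blinfun_apply g d = 0}"
  have subS: "subspace S" unfolding S_def subspace_def by (simp add: blinfun.add_right blinfun.scaleR_right)
  have "dim S \<le> dim S' + 1"
  proof (cases "\<forall>s\<in>S. blinfun_apply h s = 0")
    case True
    then have "S' = S" unfolding S_def S'_def by auto
    then show ?thesis by simp
  next
    case False
    then obtain s0 where s0: "s0 \<in> S" "blinfun_apply h s0 \<noteq> 0" by blast
    have "S \<subseteq> span (insert s0 S')"
    proof
      fix s assume s: "s \<in> S"
      define c where "c = blinfun_apply h s / blinfun_apply h s0"
      have "s - c *\<^sub>R s0 \<in> S" using subS s s0(1) by (simp add: subspace_diff subspace_mul)
      moreover have "blinfun_apply h (s - c *\<^sub>R s0) = 0"
        using s0(2) by (simp add: c_def blinfun.diff_right blinfun.scaleR_right)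
      ultimately have "s - c *\<^sub>R s0 \<in> S'" unfolding S_def S'_def by auto
      then have "s - c *\<^sub>R s0 \<in> span (insert s0 S')" by (simp add: span_base)
      moreover have "c *\<^sub>R s0 \<in> span (insert s0 S')" by (simp add: span_base span_mul)
      ultimately have "(s - c *\<^sub>R s0) + c *\<^sub>R s0 \<in> span (insert s0 S')" by (rule span_add)
      then show "s \<in> span (insert s0 S')" by simp
    qed
    then have "dim S \<le> dim (insert s0 S')" by (rule fd.dim_mono)
    also have "\<dots> \<le> dim S' + 1" by (simp add: fd.dim_insert)
    finally show ?thesis .
  qed
  moreover have "card (insert h H) = card H + 1" using insert.hyps by simp
  moreover have "dim (UNIV::'a set) \<le> dim S + card H" using insert.IH unfolding S_def .
  ultimately have "dim (UNIV::'a set) \<le> dim S' + card (insert h H)" by linarith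
  then show ?case unfolding S'_def .
qed

lemma LA2:
  fixes G :: "('a \<Rightarrow>\<^sub>L real) set"
  shows "dim (span G) + dim {d. \<forall>g\<in>G. blinfun_apply g d = 0} \<le> dim (UNIV::'a set)"
proof -
  define P where "P = {d. \<forall>g\<in>G. blinfun_apply g d = 0}"
  obtain Pb where Pb: "Pb \<subseteq> P" "independent Pb" "P \<subseteq> span Pb" "card Pb = dim P"
    by (rule basis_exists[of P])
  obtain D where D: "Pb \<subseteq> D" "D \<subseteq> UNIV" "independent D" "UNIV \<subseteq> span D"
    by (rule maximal_independent_subset_extend[OF subset_UNIV Pb(2)])
  have finD: "finite D" using D(3) by (rule fd.finiteI_independent)
  have spD: "span D = UNIV" using D(4) by blast
  have cardD: "card D = dim (UNIV::'a set)" using dim_unique[OF subset_UNIV D(4) D(3) refl] by simp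
  define \<delta> where "\<delta> b = Blinfun (\<lambda>v::'a. representation D v b)" for b
  have "span G \<subseteq> span (\<delta> ` (D - Pb))"
  proof
    fix g assume g: "g \<in> span G"
    have zero: "blinfun_apply g b = 0" if "b \<in> Pb" for b
    proof -
      have "b \<in> P" using Pb(1) that by blast
      then have "\<forall>g\<in>G. blinfun_apply g b = 0" unfolding P_def by blast
      then show ?thesis using van_span g by blast
    qed
    have "g = (\<Sum>b\<in>D. blinfun_apply g b *\<^sub>R \<delta> b)"
      unfolding \<delta>_def by (rule blinfun_expand[OF D(3) spD finD])
    also have "\<dots> = (\<Sum>b\<in>D - Pb. blinfun_apply g b *\<^sub>R \<delta> b)"
    proof (rule sum.mono_neutral_right[OF finD])
      show "D - Pb \<subseteq> D" by blast
      show "\<forall>i\<in>D - (D - Pb). blinfun_apply g i *\<^sub>R \<delta> i = 0" using zero by simp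
    qed
    also have "\<dots> \<in> span (\<delta> ` (D - Pb))"
      by (intro span_sum span_mul span_base imageI)
    finally show "g \<in> span (\<delta> ` (D - Pb))" .
  qed
  then have "dim (span G) \<le> card (\<delta> ` (D - Pb))"
    by (rule dim_le_card) (use finD in simp)
  also have "\<dots> \<le> card (D - Pb)" by (rule card_image_le) (use finD in simp)
  also have "\<dots> = card D - card Pb" by (rule card_Diff_subset[OF finite_subset[OF D(1) finD] D(1)])
  finally have le: "dim (span G) \<le> card D - card Pb" .
  have "card Pb \<le> card D" by (rule card_mono[OF finD D(1)])
  then have "dim (span G) + card Pb \<le> card D" using le le_diff_conv2 by blast
  then show ?thesis using cardD Pb(4) unfolding P_def by simp
qed

lemma LA:
  fixes G :: "('a \<Rightarrow>\<^sub>L real) set"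
  shows "dim (span G) + dim {d. \<forall>g\<in>G. blinfun_apply g d = 0} = dim (UNIV::'a set)"
proof -
  obtain Gb where Gb: "Gb \<subseteq> G" "independent Gb" "G \<subseteq> span Gb" "card Gb = dim G"
    by (rule basis_exists[of G])
  have finGb: "finite Gb" using Gb(2) by (rule dual_indep_finite)
  have "{d. \<forall>g\<in>G. blinfun_apply g d = 0} = {d. \<forall>g\<in>Gb. blinfun_apply g d = 0}"
  proof (intro set_eqI iffI CollectI ballI)
    fix d g assume "d \<in> {d. \<forall>g\<in>G. blinfun_apply g d = 0}" "g \<in> Gb"
    then show "blinfun_apply g d = 0" using Gb(1) by auto
  next
    fix d g assume d: "d \<in> {d. \<forall>g\<in>Gb. blinfun_apply g d = 0}" and g: "g \<in> G"
    then show "blinfun_apply g d = 0" using van_span[of Gb d g] Gb(3) by auto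
  qed
  then have "dim (UNIV::'a set) \<le> dim {d. \<forall>g\<in>G. blinfun_apply g d = 0} + dim G"
    using LA1[OF finGb] Gb(4) by simp
  then show ?thesis using LA2[of G] by (simp add: dim_span)
qed

end

theorem mainTheorem13:
  fixes x :: "'a::banach" and n k :: nat
  assumes "\<exists>B::'a set. finite B \<and> span B = UNIV"
    and "dim (UNIV::'a set) = n"
    and "polyhedral_space TYPE('a)"
    and "norm x = 1"
  shows "k_smooth k x \<longleftrightarrow>
    (\<exists>F::'a set. ball_face F \<and> int (face_dim F) = int n - int k \<and> x \<in> rel_interior F)"
proof -
  obtain B0 :: "'a set" where B0: "finite B0" "span B0 = UNIV" using assms(1) by blast
  obtain Bs where Bs: "{} \<subseteq> Bs" "Bs \<subseteq> B0" "independent Bs" "B0 \<subseteq> span Bs"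
    by (rule maximal_independent_subset_extend[OF empty_subsetI independent_empty])
  have finBs: "finite Bs" using Bs(2) B0(1) by (rule finite_subset)
  have spBs: "span Bs = UNIV"
  proof -
    have "span B0 \<subseteq> span Bs" using Bs(4) by (simp add: span_minimal subspace_span)
    then show ?thesis using B0(2) by auto
  qed
  have finE: "finite {e::'a. e extreme_point_of cball 0 1}"
    using assms(3) unfolding polyhedral_space_def .
  interpret P: pfdn Bs
    by unfold_locales (use Bs(3) spBs finBs finE in auto)
  have key: "face_dim F + dim (span (supp_functionals x)) = n"
    if F: "ball_face F" "x \<in> rel_interior F" for F
  proof -
    have "face_dim F = dim {d. \<forall>f\<in>supp_functionals x. blinfun_apply f d = 0}"
      unfolding face_dim_def using P.face_span[OF assms(4) F] by simp
    then show ?thesis using P.LA[of "supp_functionals x"] assms(2) by simp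
  qed
  show ?thesis
  proof
    assume "k_smooth k x"
    then have kd: "dim (span (supp_functionals x)) = k" unfolding k_smooth_def .
    have F: "ball_face (P.FJ x)" "x \<in> rel_interior (P.FJ x)"
      using P.FJ_face[OF assms(4)] P.FJ_relint[OF assms(4)] by auto
    have "face_dim (P.FJ x) + k = n" using key[OF F] kd by simp
    then have "int (face_dim (P.FJ x)) = int n - int k" by linarith
    then show "\<exists>F::'a set. ball_face F \<and> int (face_dim F) = int n - int k \<and> x \<in> rel_interior F"
      using F by blast
  next
    assume "\<exists>F::'a set. ball_face F \<and> int (face_dim F) = int n - int k \<and> x \<in> rel_interior F"
    then obtain F where F: "ball_face F" "int (face_dim F) = int n - int k" "x \<in> rel_interior F"
      by blast
    have "face_dim F + dim (span (supp_functionals x)) = n" using key F(1,3) by blast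
    then have "dim (span (supp_functionals x)) = k" using F(2) by linarith
    then show "k_smooth k x" unfolding k_smooth_def .
  qed
qed

end
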